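(* There is an absolute constant $c>0$ such that for all positive integers $t,N$ with $t\le \frac{N^{2(e^4-1)}}{36}$, $$\inf_{g}\ \sup_{R}\ \mathbb{E}\big[W_1(\Delta_R,g(\mathbf S))\big]\ \ge\ c\max\Big\{\frac1t,\ \frac{1}{\sqrt{t\log N}}\Big\},$$ where the supremum is over all probability distributions $R$ on $[0,1]^2$ and the infimum is over all estimators $g$ mapping the sample $\mathbf S$ to a probability distribution on $[-1,1]$.
   Context: Sampling model: given a probability distribution $R$ on $[0,1]^2$ and positive integers $N,t$, draw $(p_i,q_i)\sim R$ independently for $i=1,\dots,N$, and then, independently given these, $X_i\sim \mathrm{Binomial}(t,p_i)$ and $Y_i\sim\mathrm{Binomial}(t,q_i)$. The observed sample is $\mathbf S=\{(X_i,Y_i)\}_{i=1}^N$. For $(p,q)\sim R$ let $\Delta_R$ denote the distribution of $\delta=q-p$ on $[-1,1]$. $W_1$ denotes the Wasserstein-1 distance: $W_1(P,Q)=\sup_{f}\int f\,(dP-dQ)$, the supremum over all $1$-Lipschitz functions $f$ on the common support space. *)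

theory Defs
  imports "HOL-Analysis.Analysis" "HOL-Probability.Probability"
begin

text \<open>Wasserstein-1 distance between (probability) measures on the reals, via the
  Kantorovich--Rubinstein dual: supremum over 1-Lipschitz test functions.\<close>
definition W1 :: "real measure \<Rightarrow> real measure \<Rightarrow> real" where
  "W1 P Q = (SUP f \<in> {f :: real \<Rightarrow> real. lipschitz_on 1 UNIV f}.
               (\<integral>x. f x \<partial>P) - (\<integral>x. f x \<partial>Q))"

definition valid_R :: "(real \<times> real) measure \<Rightarrow> bool" where
  "valid_R R \<longleftrightarrow> prob_space R \<and> sets R = sets borel \<and>
     measure R ({0..1} \<times> {0..1}) = 1"

definition Delta :: "(real \<times> real) measure \<Rightarrow> real measure" where
  "Delta R = distr R borel (\<lambda>(p, q). q - p)"

definition binom_prob :: "nat \<Rightarrow> real \<Rightarrow> nat \<Rightarrow> real" where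
  "binom_prob t p x = real (t choose x) * p ^ x * (1 - p) ^ (t - x)"

definition pair_prob :: "(real \<times> real) measure \<Rightarrow> nat \<Rightarrow> nat \<times> nat \<Rightarrow> real" where
  "pair_prob R t xy = (\<integral>pq. binom_prob t (fst pq) (fst xy) * binom_prob t (snd pq) (snd xy) \<partial>R)"

definition samples :: "nat \<Rightarrow> nat \<Rightarrow> (nat \<times> nat) list set" where
  "samples N t = {s. length s = N \<and> set s \<subseteq> {0..t} \<times> {0..t}}"

definition sample_prob :: "(real \<times> real) measure \<Rightarrow> nat \<Rightarrow> (nat \<times> nat) list \<Rightarrow> real" where
  "sample_prob R t s = prod_list (map (pair_prob R t) s)"

definition valid_estimator :: "((nat \<times> nat) list \<Rightarrow> real measure) \<Rightarrow> bool" where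
  "valid_estimator g \<longleftrightarrow> (\<forall>s. prob_space (g s) \<and> sets (g s) = sets borel \<and>
                              measure (g s) {-1..1} = 1)"

definition risk :: "nat \<Rightarrow> nat \<Rightarrow> ((nat \<times> nat) list \<Rightarrow> real measure) \<Rightarrow> (real \<times> real) measure \<Rightarrow> real" where
  "risk N t g R = (\<Sum>s\<in>samples N t. sample_prob R t s * W1 (Delta R) (g s))"

end

theory Submission
  imports Defs
begin


lemma diff_step:
  fixes f :: "nat \<Rightarrow> real"
  shows "(\<Sum>i\<le>Suc n. (-1)^i * real (Suc n choose i) * f i)
       = (\<Sum>i\<le>n. (-1)^i * real (n choose i) * (f i - f (Suc i)))"
proof -
  have L: "(\<Sum>i\<le>Suc n. (-1)^i * real (Suc n choose i) * f i)
     = f 0 + (\<Sum>i\<le>n. (-1)^(Suc i) * (real (n choose i) + real (n choose Suc i)) * f (Suc i))"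
    by (subst sum.atMost_Suc_shift) simp
  have R1: "(\<Sum>i\<le>n. (-1)^i * real (n choose i) * f i)
     = f 0 + (\<Sum>i\<le>n. (-1)^(Suc i) * real (n choose Suc i) * f (Suc i))"
  proof (cases n)
    case 0 then show ?thesis by simp
  next
    case (Suc m)
    have "(\<Sum>i\<le>n. (-1)^i * real (n choose i) * f i)
       = f 0 + (\<Sum>i\<le>m. (-1)^(Suc i) * real (n choose Suc i) * f (Suc i))"
      unfolding Suc by (subst sum.atMost_Suc_shift) (simp del: binomial_Suc_Suc)
    also have "(\<Sum>i\<le>m. (-1)^(Suc i) * real (n choose Suc i) * f (Suc i))
       = (\<Sum>i\<le>n. (-1)^(Suc i) * real (n choose Suc i) * f (Suc i))"
      unfolding Suc by (simp add: sum.atMost_Suc del: binomial_Suc_Suc)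
    finally show ?thesis .
  qed
  have "(\<Sum>i\<le>n. (-1)^i * real (n choose i) * (f i - f (Suc i)))
      = (\<Sum>i\<le>n. (-1)^i * real (n choose i) * f i) + (\<Sum>i\<le>n. (-1)^(Suc i) * real (n choose i) * f (Suc i))"
    by (simp add: sum.distrib[symmetric] algebra_simps)
  also have "\<dots> = f 0 + (\<Sum>i\<le>n. (-1)^(Suc i) * (real (n choose i) + real (n choose Suc i)) * f (Suc i))"
    unfolding R1 by (simp add: add.assoc sum.distrib[symmetric] ring_distribs, intro sum.cong, auto)
  finally show ?thesis using L by simp
qed

lemma fin_diff:
  "k < n \<Longrightarrow> (\<Sum>i\<le>n. (-1)^i * real (n choose i) * (a + b * real i)^k) = 0"
proof (induction n arbitrary: k a)
  case 0 then show ?case by simp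
next
  case (Suc n)
  have step: "(a + b * real i)^k - (a + b * real (Suc i))^k
      = - (\<Sum>j<k. real (k choose j) * b^(k-j) * (a + b * real i)^j)" for i
  proof -
    have "(a + b * real (Suc i))^k = ((a + b * real i) + b)^k" by (simp add: algebra_simps)
    also have "\<dots> = (\<Sum>j\<le>k. real (k choose j) * (a + b * real i)^j * b^(k-j))"
      by (rule binomial_ring)
    also have "\<dots> = (\<Sum>j<k. real (k choose j) * b^(k-j) * (a + b * real i)^j) + (a + b * real i)^k"
      by (simp add: lessThan_Suc_atMost[symmetric] algebra_simps)
    finally show ?thesis by simp
  qed
  have "(\<Sum>i\<le>Suc n. (-1)^i * real (Suc n choose i) * (a + b * real i)^k)
     = (\<Sum>i\<le>n. (-1)^i * real (n choose i) * (- (\<Sum>j<k. real (k choose j) * b^(k-j) * (a + b * real i)^j)))"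
    by (subst diff_step) (simp only: step)
  also have "\<dots> = - (\<Sum>j<k. real (k choose j) * b^(k-j) * (\<Sum>i\<le>n. (-1)^i * real (n choose i) * (a + b * real i)^j))"
    by (simp add: sum_distrib_left sum_negf algebra_simps sum.swap[of _ "{..n}"])
  also have "\<dots> = 0"
    using Suc.prems by (auto intro!: sum.neutral Suc.IH)
  finally show ?case .
qed



lemma binom_half: "x \<le> t \<Longrightarrow> binom_prob t (1/2) x = real (t choose x) / 2^t"
  by (simp add: binom_prob_def power_add[symmetric] power_divide)

lemma binom_sum: "(\<Sum>x\<le>t. binom_prob t p x) = 1"
  using binomial_ring[of p "1-p" t] by (simp add: binom_prob_def mult_ac)

lemma chi_id:
  fixes \<nu> u :: "nat \<Rightarrow> real" and I :: "nat set"
  assumes "finite I"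
  shows "(\<Sum>x\<le>t. (\<Sum>i\<in>I. \<nu> i * binom_prob t (1/2 + u i) x)^2 / binom_prob t (1/2) x)
       = (\<Sum>k\<le>t. real (t choose k) * 4^k * (\<Sum>i\<in>I. \<nu> i * u i ^ k)^2)"
proof -
  define P where "P i j = (1/2 + u i) * (1/2 + u j)" for i j
  define Q where "Q i j = (1 - (1/2 + u i)) * (1 - (1/2 + u j))" for i j
  have px: "(\<Sum>i\<in>I. \<nu> i * binom_prob t (1/2 + u i) x)^2 / binom_prob t (1/2) x
      = (\<Sum>i\<in>I. \<Sum>j\<in>I. \<nu> i * \<nu> j * (2^t * (real (t choose x) * P i j ^ x * Q i j ^ (t-x))))"
    if "x \<le> t" for x
  proof -
    have cpos: "real (t choose x) > 0" using that by simp
    have "(\<Sum>i\<in>I. \<nu> i * binom_prob t (1/2 + u i) x)^2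
       = (\<Sum>i\<in>I. \<Sum>j\<in>I. (\<nu> i * binom_prob t (1/2 + u i) x) * (\<nu> j * binom_prob t (1/2 + u j) x))"
      by (simp add: power2_eq_square sum_product)
    also have "\<dots> = (\<Sum>i\<in>I. \<Sum>j\<in>I. \<nu> i * \<nu> j * (real (t choose x) * real (t choose x) * P i j ^ x * Q i j ^ (t-x)))"
      by (simp add: binom_prob_def P_def Q_def power_mult_distrib mult_ac)
    finally show ?thesis using that cpos
      by (simp add: binom_half sum_distrib_left field_simps)
  qed
  have "(\<Sum>x\<le>t. (\<Sum>i\<in>I. \<nu> i * binom_prob t (1/2 + u i) x)^2 / binom_prob t (1/2) x)
      = (\<Sum>x\<le>t. \<Sum>i\<in>I. \<Sum>j\<in>I. \<nu> i * \<nu> j * (2^t * (real (t choose x) * P i j ^ x * Q i j ^ (t-x))))"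
    by (rule sum.cong) (auto simp: px)
  also have "\<dots> = (\<Sum>i\<in>I. \<Sum>j\<in>I. \<nu> i * \<nu> j * (2^t * (\<Sum>x\<le>t. real (t choose x) * P i j ^ x * Q i j ^ (t-x))))"
    by (simp add: sum.swap[of _ "{..t}"] sum_distrib_left)
  also have "\<dots> = (\<Sum>i\<in>I. \<Sum>j\<in>I. \<nu> i * \<nu> j * (2^t * (P i j + Q i j)^t))"
    by (simp add: binomial_ring)
  also have "\<dots> = (\<Sum>i\<in>I. \<Sum>j\<in>I. \<nu> i * \<nu> j * (4 * u i * u j + 1)^t)"
  proof -
    have "2^t * (P i j + Q i j)^t = (4 * u i * u j + 1)^t" for i j
    proof -
      have "2 * (P i j + Q i j) = 4 * u i * u j + 1" by (simp add: P_def Q_def algebra_simps)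
      then show ?thesis by (metis power_mult_distrib)
    qed
    then show ?thesis by simp
  qed
  also have "\<dots> = (\<Sum>i\<in>I. \<Sum>j\<in>I. \<nu> i * \<nu> j * (\<Sum>k\<le>t. real (t choose k) * (4 * u i * u j)^k))"
    by (simp add: binomial_ring)
  also have "\<dots> = (\<Sum>k\<le>t. real (t choose k) * 4^k * ((\<Sum>i\<in>I. \<nu> i * u i ^ k) * (\<Sum>j\<in>I. \<nu> j * u j ^ k)))"
    by (simp add: sum_distrib_left sum_distrib_right sum.swap[of _ "{..t}"] power_mult_distrib mult_ac)
  finally show ?thesis by (simp add: power2_eq_square)
qed



lemma tv_bound:
  fixes b d :: "nat \<Rightarrow> real"
  assumes "finite A" "\<And>x. x \<in> A \<Longrightarrow> b x > 0" "(\<Sum>x\<in>A. b x) = 1" "lam > 0"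
    "(\<Sum>x\<in>A. (d x)^2 / b x) \<le> lam^2"
  shows "(\<Sum>x\<in>A. \<bar>d x\<bar>) \<le> lam"
proof -
  have pw: "\<bar>d x\<bar> \<le> (lam * b x + (d x)^2 / b x / lam) / 2" if "x \<in> A" for x
  proof -
    have bx: "b x > 0" using assms(2) that by auto
    have "0 \<le> (lam * b x - \<bar>d x\<bar>)^2 / (lam * b x)" using bx assms(4) by simp
    also have "(lam * b x - \<bar>d x\<bar>)^2 / (lam * b x) = lam * b x + (d x)^2 / b x / lam - 2 * \<bar>d x\<bar>"
      using bx assms(4) by (simp add: power2_eq_square field_simps)
    finally show ?thesis by simp
  qed
  have "(\<Sum>x\<in>A. \<bar>d x\<bar>) \<le> (\<Sum>x\<in>A. (lam * b x + (d x)^2 / b x / lam) / 2)"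
    by (rule sum_mono) (rule pw)
  also have "\<dots> = (lam * (\<Sum>x\<in>A. b x) + (\<Sum>x\<in>A. (d x)^2 / b x) / lam) / 2"
    by (simp only: sum_divide_distrib[symmetric] sum.distrib sum_distrib_left[symmetric])
  also have "\<dots> \<le> (lam + lam^2 / lam) / 2"
    using assms(3-5) by (simp add: divide_right_mono)
  also have "\<dots> = lam" using assms(4) by (simp add: power2_eq_square)
  finally show ?thesis .
qed

definition nu :: "nat \<Rightarrow> nat \<Rightarrow> real" where
  "nu n i = (-1)^i * real (n choose i) / 2^(n-1)"
definition uu :: "nat \<Rightarrow> real \<Rightarrow> nat \<Rightarrow> real" where
  "uu n w i = -w + 2 * w / real n * real i"

lemma moment_zero: "k < n \<Longrightarrow> (\<Sum>i\<le>n. nu n i * uu n w i ^ k) = 0"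
  using fin_diff[of k n "-w" "2 * w / real n"]
  by (simp add: nu_def uu_def sum_divide_distrib[symmetric] mult_ac)

lemma abs_nu_sum: "n > 0 \<Longrightarrow> (\<Sum>i\<le>n. \<bar>nu n i\<bar>) = 2"
proof -
  assume n: "n > 0"
  have "(\<Sum>i\<le>n. \<bar>nu n i\<bar>) = (\<Sum>i\<le>n. real (n choose i)) / 2^(n-1)"
    by (simp add: nu_def abs_mult sum_divide_distrib)
  also have "(\<Sum>i\<le>n. real (n choose i)) = 2^n"
    using choose_row_sum[of n] by (metis of_nat_numeral of_nat_power of_nat_sum)
  also have "(2::real)^n / 2^(n-1) = 2" using n
    by (cases n) simp_all
  finally show ?thesis .
qed

lemma abs_uu: "i \<le> n \<Longrightarrow> n > 0 \<Longrightarrow> w \<ge> 0 \<Longrightarrow> \<bar>uu n w i\<bar> \<le> w"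
proof -
  assume a: "i \<le> n" "n > 0" "w \<ge> 0"
  have "real i / real n \<le> 1" using a by simp
  then have "2 * w / real n * real i \<le> 2 * w" using a
    by (metis divide_le_eq_1 mult.commute mult_left_le  of_nat_0_le_iff times_divide_eq_right zero_le_mult_iff zero_le_numeral)
  moreover have "0 \<le> 2 * w / real n * real i" using a by simp
  ultimately show ?thesis by (simp add: uu_def)
qed

lemma moment_bound: "n > 0 \<Longrightarrow> w \<ge> 0 \<Longrightarrow> \<bar>\<Sum>i\<le>n. nu n i * uu n w i ^ k\<bar> \<le> 2 * w^k"
proof -
  assume a: "n > 0" "w \<ge> 0"
  have "\<bar>\<Sum>i\<le>n. nu n i * uu n w i ^ k\<bar> \<le> (\<Sum>i\<le>n. \<bar>nu n i\<bar> * w^k)"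
    apply (rule order_trans[OF sum_abs], rule sum_mono)
    using abs_uu[OF _ a(1,2)] by (auto simp: abs_mult power_abs intro!: mult_left_mono power_mono)
  also have "\<dots> = 2 * w^k" using abs_nu_sum[OF a(1)] by (simp add: sum_distrib_right[symmetric])
  finally show ?thesis .
qed

definition mix :: "nat \<Rightarrow> real \<Rightarrow> nat \<Rightarrow> nat \<Rightarrow> real" where
  "mix n w t x = (\<Sum>i\<le>n. nu n i * binom_prob t (1/2 + uu n w i) x)"

lemma chi_bound:
  assumes "n > 0" "w \<ge> 0"
  shows "(\<Sum>x\<le>t. (mix n w t x)^2 / binom_prob t (1/2) x)
     \<le> 4 * (\<Sum>k\<in>{n..t}. real (t choose k) * (4 * w^2)^k)"
proof -
  have "(\<Sum>x\<le>t. (mix n w t x)^2 / binom_prob t (1/2) x)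
     = (\<Sum>k\<le>t. real (t choose k) * 4^k * (\<Sum>i\<le>n. nu n i * uu n w i ^ k)^2)"
    unfolding mix_def by (rule chi_id) simp
  also have "\<dots> = (\<Sum>k\<in>{n..t}. real (t choose k) * 4^k * (\<Sum>i\<le>n. nu n i * uu n w i ^ k)^2)"
    by (rule sum.mono_neutral_right) (auto simp: moment_zero)
  also have "\<dots> \<le> (\<Sum>k\<in>{n..t}. real (t choose k) * 4^k * (2 * w^k)^2)"
  proof (rule sum_mono)
    fix k
    have "(\<Sum>i\<le>n. nu n i * uu n w i ^ k)^2 \<le> (2 * w^k)^2"
      using moment_bound[OF assms, of k] by (metis abs_le_square_iff abs_of_nonneg assms(2) zero_le_mult_iff zero_le_numeral zero_le_power)
    then show "real (t choose k) * 4^k * (\<Sum>i\<le>n. nu n i * uu n w i ^ k)^2 \<le> real (t choose k) * 4^k * (2 * w^k)^2"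
      by (intro mult_left_mono) auto
  qed
  also have "\<dots> = 4 * (\<Sum>k\<in>{n..t}. real (t choose k) * (4 * w^2)^k)"
    by (simp add: sum_distrib_left power_mult_distrib power_mult[symmetric] mult_ac)
  finally show ?thesis .
qed



definition goodM :: "real measure \<Rightarrow> bool" where
  "goodM M \<longleftrightarrow> prob_space M \<and> sets M = sets borel \<and> measure M {-1..1} = 1"

lemma lip_meas:
  fixes f :: "real \<Rightarrow> real"
  assumes "lipschitz_on 1 UNIV f" "sets M = sets borel"
  shows "f \<in> borel_measurable M"
proof -
  have "f \<in> borel_measurable borel"
    by (rule borel_measurable_continuous_onI, rule lipschitz_on_continuous_on[OF assms(1)])
  moreover have "measurable M borel = measurable borel (borel::real measure)"
    by (rule measurable_cong_sets[OF assms(2)]) simp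
  ultimately show ?thesis by (simp only:)
qed

lemma lip_int:
  fixes f :: "real \<Rightarrow> real"
  assumes g: "goodM M" and f: "lipschitz_on 1 UNIV f"
  shows "integrable M f" "\<bar>(\<integral>x. f x \<partial>M) - f 0\<bar> \<le> 1"
proof -
  interpret prob_space M using g by (simp add: goodM_def)
  have ae: "AE x in M. x \<in> {-1..1}"
    by (rule AE_prob_1) (use g in \<open>simp add: goodM_def\<close>)
  have bnd: "AE x in M. \<bar>f x - f 0\<bar> \<le> 1"
    using ae
  proof (rule eventually_mono)
    fix x :: real assume "x \<in> {-1..1}"
    then have "dist (f x) (f 0) \<le> 1 * dist x 0"
      using lipschitz_onD[OF f] by blast
    then have "\<bar>f x - f 0\<bar> \<le> \<bar>x\<bar>" by (simp add: dist_real_def)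
    then show "\<bar>f x - f 0\<bar> \<le> 1" using \<open>x \<in> {-1..1}\<close> by auto
  qed
  have meas: "f \<in> borel_measurable M" using lip_meas f g by (simp add: goodM_def)
  have i1: "integrable M (\<lambda>x. f x - f 0)"
    apply (rule Bochner_Integration.integrable_bound[of M "\<lambda>_. 1::real"])
    using meas bnd by auto
  then show "integrable M f"
    using Bochner_Integration.integrable_add[OF i1, of "\<lambda>_. f 0"] by simp
  have "(\<integral>x. f x \<partial>M) - f 0 = (\<integral>x. f x - f 0 \<partial>M)"
    using \<open>integrable M f\<close> by (simp add: prob_space)
  moreover have "(\<integral>x. f x - f 0 \<partial>M) \<le> 1"
    using i1 bnd by (intro integral_le_const) auto
  moreover have "-1 \<le> (\<integral>x. f x - f 0 \<partial>M)"
    using i1 bnd by (intro integral_ge_const) auto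
  ultimately show "\<bar>(\<integral>x. f x \<partial>M) - f 0\<bar> \<le> 1" by linarith
qed

lemma W1_bdd:
  assumes "goodM P" "goodM Q"
  shows "bdd_above ((\<lambda>f. (\<integral>x. f x \<partial>P) - (\<integral>x. f x \<partial>Q)) ` {f :: real \<Rightarrow> real. lipschitz_on 1 UNIV f})"
proof (rule bdd_aboveI2)
  fix f :: "real \<Rightarrow> real" assume "f \<in> {f. lipschitz_on 1 UNIV f}"
  then have "lipschitz_on 1 UNIV f" by simp
  from lip_int(2)[OF assms(1) this] lip_int(2)[OF assms(2) this]
  show "(\<integral>x. f x \<partial>P) - (\<integral>x. f x \<partial>Q) \<le> 2" by linarith
qed

lemma W1_ge:
  assumes "goodM P" "goodM Q" "lipschitz_on 1 UNIV f"
  shows "(\<integral>x. f x \<partial>P) - (\<integral>x. f x \<partial>Q) \<le> W1 P Q"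
  unfolding W1_def by (rule cSUP_upper[OF _ W1_bdd[OF assms(1,2)]]) (use assms(3) in simp)

lemma lip_zero: "lipschitz_on 1 UNIV (\<lambda>x::real. 0::real)"
  by (rule lipschitz_onI) auto

lemma W1_nonneg: "goodM P \<Longrightarrow> goodM Q \<Longrightarrow> 0 \<le> W1 P Q"
  using W1_ge[OF _ _ lip_zero] by simp

lemma W1_le2: "goodM P \<Longrightarrow> goodM Q \<Longrightarrow> W1 P Q \<le> 2"
  unfolding W1_def
proof (rule cSUP_least)
  show "{f :: real \<Rightarrow> real. lipschitz_on 1 UNIV f} \<noteq> {}" using lip_zero by blast
next
  fix f :: "real \<Rightarrow> real" assume "goodM P" "goodM Q" "f \<in> {f. lipschitz_on 1 UNIV f}"
  then show "(\<integral>x. f x \<partial>P) - (\<integral>x. f x \<partial>Q) \<le> 2"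
    using lip_int(2)[of P f] lip_int(2)[of Q f] by auto
qed

lemma psi_meas: "(\<lambda>(p::real, q::real). q - p) \<in> borel_measurable borel"
proof -
  have "continuous_on UNIV (\<lambda>x::real\<times>real. snd x - fst x)" by (intro continuous_intros)
  then have "(\<lambda>x::real\<times>real. snd x - fst x) \<in> borel_measurable borel"
    by (rule borel_measurable_continuous_onI)
  then show ?thesis by (simp add: case_prod_beta')
qed

lemma Delta_good:
  assumes "valid_R R" shows "goodM (Delta R)"
proof -
  have pR: "prob_space R" and sR: "sets R = sets borel" and mR: "measure R ({0..1} \<times> {0..1}) = 1"
    using assms by (auto simp: valid_R_def)
  interpret prob_space R by fact
  have mp: "(\<lambda>(p::real, q::real). q - p) \<in> measurable R borel"
  proof -
    have "measurable R borel = measurable borel (borel::real measure)"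
      by (rule measurable_cong_sets[OF sR]) simp
    then show ?thesis using psi_meas by simp
  qed
  have spR: "space R = UNIV" using sets_eq_imp_space_eq[OF sR] by simp
  have ev: "{-1..1::real} \<in> sets borel" by simp
  have "measure (Delta R) {-1..1} = measure R ((\<lambda>(p, q). q - p) -` {-1..1} \<inter> space R)"
    unfolding Delta_def by (rule measure_distr[OF mp ev])
  also have "\<dots> = 1"
  proof -
    have sub: "{0..1} \<times> {0..1} \<subseteq> (\<lambda>(p::real, q::real). q - p) -` {-1..1} \<inter> space R"
      by (auto simp: spR)
    have "(\<lambda>(p::real, q::real). q - p) -` {-1..1} \<inter> space R \<in> events"
      using mp ev by (rule measurable_sets)
    then have "1 \<le> measure R ((\<lambda>(p, q). q - p) -` {-1..1} \<inter> space R)"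
      using finite_measure_mono[OF sub] mR by simp
    then show ?thesis using prob_le_1 by (simp add: antisym)
  qed
  finally show ?thesis
    unfolding goodM_def Delta_def using prob_space_distr[OF mp] by simp
qed



definition wt :: "nat \<Rightarrow> bool \<Rightarrow> nat \<Rightarrow> real" where
  "wt n b i = (if i \<le> n \<and> even i = b then real (n choose i) / 2^(n-1) else 0)"

lemma wt_nonneg: "0 \<le> wt n b i" by (simp add: wt_def)

lemma wt_sum: assumes "n > 0" shows "(\<Sum>i\<le>n. wt n b i) = 1"
proof -
  have e: "2 * (\<Sum>i\<le>n. if even i then real (n choose i) else 0) = 2^n"
    by (rule choose_even_sum[OF assms])
  have o: "2 * (\<Sum>i\<le>n. if odd i then real (n choose i) else 0) = 2^n"
    by (rule choose_odd_sum[OF assms])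
  have p: "(2::real)^n = 2 * 2^(n-1)" using assms by (cases n) auto
  have "(\<Sum>i\<le>n. wt n b i) = (\<Sum>i\<le>n. if even i = b then real (n choose i) else 0) / 2^(n-1)"
    unfolding wt_def sum_divide_distrib by (rule sum.cong) auto
  also have "(\<Sum>i\<le>n. if even i = b then real (n choose i) else 0) = 2^(n-1)"
    using e o p by (cases b) auto
  finally show ?thesis by simp
qed

lemma wt_prob: assumes "n > 0" shows "(\<integral>\<^sup>+x. ennreal (wt n b x) \<partial>count_space UNIV) = 1"
proof -
  have "(\<integral>\<^sup>+x. ennreal (wt n b x) \<partial>count_space UNIV) = (\<Sum>x\<le>n. ennreal (wt n b x))"
    by (rule nn_integral_count_space') (auto simp: wt_def)
  also have "\<dots> = ennreal (\<Sum>x\<le>n. wt n b x)" by (rule sum_ennreal) (simp add: wt_nonneg)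
  finally show ?thesis using wt_sum[OF assms] by simp
qed

definition Ep :: "nat \<Rightarrow> bool \<Rightarrow> nat pmf" where
  "Ep n b = embed_pmf (wt n b)"

lemma pmf_Ep: "n > 0 \<Longrightarrow> pmf (Ep n b) i = wt n b i"
  unfolding Ep_def by (rule pmf_embed_pmf) (auto simp: wt_nonneg wt_prob)

lemma integral_Ep:
  fixes f :: "nat \<Rightarrow> real"
  assumes "n > 0"
  shows "(\<integral>i. f i \<partial>measure_pmf (Ep n b)) = (\<Sum>i\<le>n. wt n b i * f i)"
proof -
  have "(\<integral>i. f i \<partial>measure_pmf (Ep n b)) = (\<Sum>i\<le>n. f i * pmf (Ep n b) i)"
  proof (rule integral_measure_pmf_real)
    fix a assume "a \<in> set_pmf (Ep n b)"
    then have "pmf (Ep n b) a \<noteq> 0" by (simp add: set_pmf_iff)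
    then show "a \<in> {..n}" using pmf_Ep[OF assms] by (auto simp: wt_def split: if_splits)
  qed simp
  then show ?thesis by (simp add: pmf_Ep[OF assms] mult.commute)
qed

definition Tm :: "nat \<Rightarrow> real \<Rightarrow> nat \<Rightarrow> real \<times> real" where
  "Tm n w i = (1/2 + uu n w i, 1/2)"

definition Rm :: "nat \<Rightarrow> real \<Rightarrow> bool \<Rightarrow> (real \<times> real) measure" where
  "Rm n w b = distr (measure_pmf (Ep n b)) borel (Tm n w)"

lemma Tm_meas: "Tm n w \<in> measurable (measure_pmf (Ep n b)) borel" by simp

lemma int_Rm:
  fixes F :: "real \<times> real \<Rightarrow> real"
  assumes "n > 0" "F \<in> borel_measurable borel"
  shows "(\<integral>z. F z \<partial>Rm n w b) = (\<Sum>i\<le>n. wt n b i * F (Tm n w i))"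
  unfolding Rm_def by (simp add: integral_distr[OF Tm_meas assms(2)] integral_Ep[OF assms(1)])

lemma valid_Rm:
  assumes "n > 0" "0 \<le> w" "w \<le> 1/2"
  shows "valid_R (Rm n w b)"
proof -
  interpret prob_space "Rm n w b" unfolding Rm_def
    by (rule measure_pmf.prob_space_distr) simp
  have "measure (Rm n w b) ({0..1} \<times> {0..1}) = measure (measure_pmf (Ep n b)) (Tm n w -` ({0..1} \<times> {0..1}))"
    unfolding Rm_def by (subst measure_distr) (auto intro!: borel_closed closed_Times)
  also have "\<dots> = 1"
  proof (rule measure_pmf.prob_eq_1[THEN iffD2])
    show "AE x in measure_pmf (Ep n b). x \<in> Tm n w -` ({0..1} \<times> {0..1})"
    proof (rule AE_pmfI)
      fix i assume "i \<in> set_pmf (Ep n b)"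
      then have "pmf (Ep n b) i \<noteq> 0" by (simp add: set_pmf_iff)
      then have "i \<le> n" using pmf_Ep[OF assms(1)] by (auto simp: wt_def split: if_splits)
      then have "\<bar>uu n w i\<bar> \<le> w" using abs_uu assms by auto
      then show "i \<in> Tm n w -` ({0..1} \<times> {0..1})" using assms by (auto simp: Tm_def)
    qed
  qed simp
  finally show ?thesis unfolding valid_R_def
    using prob_space_axioms by (simp add: Rm_def)
qed

lemma binprod_meas:
  "(\<lambda>pq::real\<times>real. binom_prob t (fst pq) x * binom_prob t (snd pq) y) \<in> borel_measurable borel"
  by (rule borel_measurable_continuous_onI) (simp add: binom_prob_def, intro continuous_intros)

lemma pair_Rm:
  assumes "n > 0"
  shows "pair_prob (Rm n w b) t (x, y)
     = (\<Sum>i\<le>n. wt n b i * binom_prob t (1/2 + uu n w i) x) * binom_prob t (1/2) y"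
  unfolding pair_prob_def
  by (simp add: int_Rm[OF assms binprod_meas] Tm_def sum_distrib_left mult_ac)

lemma Delta_int:
  fixes f :: "real \<Rightarrow> real"
  assumes "n > 0" "f \<in> borel_measurable borel"
  shows "(\<integral>z. f z \<partial>Delta (Rm n w b)) = (\<Sum>i\<le>n. wt n b i * f (- uu n w i))"
proof -
  have sR: "sets (Rm n w b) = sets borel" by (simp add: Rm_def)
  have m: "(\<lambda>(p::real, q::real). q - p) \<in> measurable (Rm n w b) borel"
  proof -
    have "measurable (Rm n w b) borel = measurable borel (borel::real measure)"
      by (rule measurable_cong_sets[OF sR]) simp
    then show ?thesis using psi_meas by simp
  qed
  have fm: "(\<lambda>z. f ((\<lambda>(p::real, q::real). q - p) z)) \<in> borel_measurable borel"
    using measurable_comp[OF psi_meas assms(2)] by (simp add: comp_def)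
  show ?thesis
    unfolding Delta_def
    by (simp add: integral_distr[OF m assms(2)] int_Rm[OF assms(1) fm] Tm_def)
qed

lemma Rm_good: "n > 0 \<Longrightarrow> 0 \<le> w \<Longrightarrow> w \<le> 1/2 \<Longrightarrow> goodM (Delta (Rm n w b))"
  by (rule Delta_good[OF valid_Rm])

lemma nu_wt: "i \<le> n \<Longrightarrow> nu n i = wt n True i - wt n False i"
  by (simp add: nu_def wt_def)



lemma samples_0: "samples 0 t = {[]}" by (auto simp: samples_def)

lemma samples_Suc: "samples (Suc N) t = (\<lambda>(a, s). a # s) ` (({0..t} \<times> {0..t}) \<times> samples N t)"
  by (auto simp: samples_def length_Suc_conv image_iff)

lemma inj_cons: "inj_on (\<lambda>(a, s). a # s) X" by (auto simp: inj_on_def)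

lemma finite_samples: "finite (samples N t)"
  by (induction N) (auto simp: samples_0 samples_Suc)

lemma prod_sum: "(\<Sum>s\<in>samples N t. prod_list (map h s)) = (\<Sum>xy\<in>{0..t} \<times> {0..t}. (h xy :: real))^N"
proof (induction N)
  case 0 then show ?case by (simp add: samples_0)
next
  case (Suc N)
  have "(\<Sum>s\<in>samples (Suc N) t. prod_list (map h s))
      = (\<Sum>(a, s)\<in>({0..t} \<times> {0..t}) \<times> samples N t. h a * prod_list (map h s))"
    unfolding samples_Suc by (subst sum.reindex[OF inj_cons]) (simp add: case_prod_beta')
  also have "\<dots> = (\<Sum>a\<in>{0..t} \<times> {0..t}. \<Sum>s\<in>samples N t. h a * prod_list (map h s))"
    by (rule sum.cartesian_product[symmetric])
  also have "\<dots> = (\<Sum>a\<in>{0..t} \<times> {0..t}. h a) * (\<Sum>s\<in>samples N t. prod_list (map h s))"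
    unfolding sum_distrib_right by (simp add: sum_distrib_left)
  finally show ?case using Suc.IH by simp
qed

lemma prod_list_nonneg: "(\<And>a. a \<in> set s \<Longrightarrow> 0 \<le> h a) \<Longrightarrow> 0 \<le> prod_list (map h s :: real list)"
  by (induction s) auto

lemma prod_list_le1: "(\<And>a. a \<in> set s \<Longrightarrow> 0 \<le> h a \<and> h a \<le> 1) \<Longrightarrow> prod_list (map h s :: real list) \<le> 1"
  by (induction s) (auto intro: mult_le_one prod_list_nonneg)

lemma prod_tv:
  fixes h1 h2 :: "nat \<times> nat \<Rightarrow> real"
  assumes nn: "\<And>a. a \<in> {0..t} \<times> {0..t} \<Longrightarrow> 0 \<le> h1 a \<and> 0 \<le> h2 a"
    and s1: "(\<Sum>xy\<in>{0..t} \<times> {0..t}. h1 xy) = 1" and s2: "(\<Sum>xy\<in>{0..t} \<times> {0..t}. h2 xy) = 1"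
  shows "(\<Sum>s\<in>samples N t. \<bar>prod_list (map h1 s) - prod_list (map h2 s)\<bar>)
     \<le> real N * (\<Sum>xy\<in>{0..t} \<times> {0..t}. \<bar>h1 xy - h2 xy\<bar>)"
proof (induction N)
  case 0 then show ?case by (simp add: samples_0)
next
  case (Suc N)
  let ?A = "{0..t} \<times> {0..t}"
  let ?D = "(\<Sum>xy\<in>?A. \<bar>h1 xy - h2 xy\<bar>)"
  have nn1: "0 \<le> prod_list (map h1 s)" if "s \<in> samples N t" for s
    using that nn by (intro prod_list_nonneg) (auto simp: samples_def)
  have S1: "(\<Sum>s\<in>samples N t. prod_list (map h1 s)) = 1" using prod_sum[where N=N and t=t and h=h1] s1 by simp
  have "(\<Sum>s\<in>samples (Suc N) t. \<bar>prod_list (map h1 s) - prod_list (map h2 s)\<bar>)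
      = (\<Sum>a\<in>?A. \<Sum>s\<in>samples N t. \<bar>h1 a * prod_list (map h1 s) - h2 a * prod_list (map h2 s)\<bar>)"
    unfolding samples_Suc
    by (subst sum.reindex[OF inj_cons]) (simp add: case_prod_beta' sum.cartesian_product)
  also have "\<dots> \<le> (\<Sum>a\<in>?A. \<Sum>s\<in>samples N t. \<bar>h1 a - h2 a\<bar> * prod_list (map h1 s)
                      + h2 a * \<bar>prod_list (map h1 s) - prod_list (map h2 s)\<bar>)"
  proof (intro sum_mono)
    fix a s assume a: "a \<in> ?A" and s: "s \<in> samples N t"
    have "h1 a * prod_list (map h1 s) - h2 a * prod_list (map h2 s)
        = (h1 a - h2 a) * prod_list (map h1 s) + h2 a * (prod_list (map h1 s) - prod_list (map h2 s))"
      by (simp add: algebra_simps)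
    then show "\<bar>h1 a * prod_list (map h1 s) - h2 a * prod_list (map h2 s)\<bar>
        \<le> \<bar>h1 a - h2 a\<bar> * prod_list (map h1 s) + h2 a * \<bar>prod_list (map h1 s) - prod_list (map h2 s)\<bar>"
      using nn[OF a] nn1[OF s] by (simp add: abs_mult abs_triangle_ineq[THEN order_trans])
  qed
  also have "\<dots> = (\<Sum>a\<in>?A. \<bar>h1 a - h2 a\<bar> * (\<Sum>s\<in>samples N t. prod_list (map h1 s))
                   + h2 a * (\<Sum>s\<in>samples N t. \<bar>prod_list (map h1 s) - prod_list (map h2 s)\<bar>))"
    by (simp add: sum.distrib sum_distrib_left)
  also have "\<dots> = ?D + (\<Sum>s\<in>samples N t. \<bar>prod_list (map h1 s) - prod_list (map h2 s)\<bar>)"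
    using S1 s2 by (simp add: sum.distrib sum_distrib_right[symmetric])
  also have "\<dots> \<le> ?D + real N * ?D" using Suc.IH by simp
  finally show ?case by (simp add: algebra_simps)
qed



lemma cos_lip: "\<bar>cos (a::real) - cos b\<bar> \<le> \<bar>a - b\<bar>"
proof -
  have "\<bar>cos a - cos b\<bar> = 2 * \<bar>sin ((a + b) / 2)\<bar> * \<bar>sin ((b - a) / 2)\<bar>"
    by (simp add: cos_diff_cos abs_mult)
  also have "\<dots> \<le> 2 * 1 * \<bar>(b - a) / 2\<bar>"
    by (intro mult_mono abs_sin_x_le_abs_x) auto
  finally show ?thesis by simp
qed

lemma binom_le1: "0 \<le> p \<Longrightarrow> p \<le> 1 \<Longrightarrow> binom_prob t p x \<le> 1"
proof -
  assume p: "0 \<le> p" "p \<le> 1"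
  show ?thesis
  proof (cases "x \<le> t")
    case True
    have "binom_prob t p x \<le> (\<Sum>y\<le>t. binom_prob t p y)"
      by (rule member_le_sum) (use True p in \<open>auto simp: binom_prob_def\<close>)
    then show ?thesis by (simp add: binom_sum)
  next
    case False then show ?thesis by (simp add: binom_prob_def binomial_eq_0 not_le)
  qed
qed

lemma binom_nonneg: "0 \<le> p \<Longrightarrow> p \<le> 1 \<Longrightarrow> 0 \<le> binom_prob t p x"
  by (simp add: binom_prob_def)

lemma pair_prob_bounds:
  assumes "valid_R R"
  shows "0 \<le> pair_prob R t xy \<and> pair_prob R t xy \<le> 1"
proof -
  have pR: "prob_space R" and sR: "sets R = sets borel" and mR: "measure R ({0..1} \<times> {0..1}) = 1"
    using assms by (auto simp: valid_R_def)
  interpret prob_space R by fact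
  define F where "F pq = binom_prob t (fst pq) (fst xy) * binom_prob t (snd pq) (snd xy)" for pq :: "real \<times> real"
  have ae: "AE pq in R. pq \<in> {0..1} \<times> {0..1}" by (rule AE_prob_1[OF mR])
  have aeF: "AE pq in R. 0 \<le> F pq \<and> F pq \<le> 1"
    using ae
  proof (rule eventually_mono)
    fix pq :: "real \<times> real" assume "pq \<in> {0..1} \<times> {0..1}"
    then show "0 \<le> F pq \<and> F pq \<le> 1" unfolding F_def
      by (cases pq) (auto intro!: mult_le_one binom_le1 binom_nonneg mult_nonneg_nonneg)
  qed
  have meas: "F \<in> borel_measurable R"
  proof -
    have "measurable R borel = measurable borel (borel::real measure)"
      by (rule measurable_cong_sets[OF sR]) simp
    then show ?thesis using binprod_meas unfolding F_def by simp
  qed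
  have int: "integrable R F"
  proof (rule Bochner_Integration.integrable_bound[of R "\<lambda>_. 1::real"])
    show "AE pq in R. norm (F pq) \<le> norm ((\<lambda>_. 1::real) pq)"
      using aeF by (rule eventually_mono) auto
  qed (use meas in auto)
  have "0 \<le> (\<integral>pq. F pq \<partial>R)" using int aeF by (intro integral_ge_const) (auto elim!: eventually_mono)
  moreover have "(\<integral>pq. F pq \<partial>R) \<le> 1" using int aeF by (intro integral_le_const) (auto elim!: eventually_mono)
  ultimately show ?thesis unfolding pair_prob_def F_def by simp
qed

lemma sample_prob_bounds:
  assumes "valid_R R"
  shows "0 \<le> sample_prob R t s \<and> sample_prob R t s \<le> 1"
  unfolding sample_prob_def
  using pair_prob_bounds[OF assms]
  by (auto intro!: prod_list_nonneg prod_list_le1)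

lemma est_good: "valid_estimator g \<Longrightarrow> goodM (g s)"
  by (simp add: valid_estimator_def goodM_def)

lemma risk_le:
  assumes "valid_estimator g" "valid_R R"
  shows "risk N t g R \<le> 2 * real (card (samples N t))"
proof -
  have "risk N t g R \<le> (\<Sum>s\<in>samples N t. 1 * 2)"
    unfolding risk_def
  proof (rule sum_mono)
    fix s
    have "W1 (Delta R) (g s) \<le> 2" by (rule W1_le2[OF Delta_good[OF assms(2)] est_good[OF assms(1)]])
    then show "sample_prob R t s * W1 (Delta R) (g s) \<le> 1 * 2"
      using sample_prob_bounds[OF assms(2), of t s]
      by (intro mult_mono) (auto intro: W1_nonneg[OF Delta_good[OF assms(2)] est_good[OF assms(1)]])
  qed
  then show ?thesis by simp
qed

lemma risk_bdd:
  assumes "valid_estimator g"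
  shows "bdd_above ((\<lambda>R. risk N t g R) ` {R. valid_R R})"
  by (rule bdd_aboveI2[where M = "2 * real (card (samples N t))"]) (use risk_le[OF assms] in auto)



lemma pair_diff:
  assumes "n > 0"
  shows "pair_prob (Rm n w True) t (x, y) - pair_prob (Rm n w False) t (x, y)
       = mix n w t x * binom_prob t (1/2) y"
proof -
  have "(\<Sum>i\<le>n. wt n True i * binom_prob t (1/2 + uu n w i) x) - (\<Sum>i\<le>n. wt n False i * binom_prob t (1/2 + uu n w i) x)
      = mix n w t x"
    unfolding mix_def sum_subtractf[symmetric]
    by (rule sum.cong) (auto simp: nu_wt algebra_simps)
  then show ?thesis by (simp add: pair_Rm[OF assms] left_diff_distrib[symmetric])
qed

lemma pair_sum:
  assumes "n > 0"
  shows "(\<Sum>xy\<in>{0..t} \<times> {0..t}. pair_prob (Rm n w b) t xy) = 1"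
proof -
  have "(\<Sum>xy\<in>{0..t} \<times> {0..t}. pair_prob (Rm n w b) t xy)
      = (\<Sum>x\<le>t. \<Sum>y\<le>t. (\<Sum>i\<le>n. wt n b i * binom_prob t (1/2 + uu n w i) x) * binom_prob t (1/2) y)"
  proof -
    have "(\<Sum>xy\<in>{0..t} \<times> {0..t}. pair_prob (Rm n w b) t xy)
        = (\<Sum>xy\<in>{0..t} \<times> {0..t}. (\<Sum>i\<le>n. wt n b i * binom_prob t (1/2 + uu n w i) (fst xy)) * binom_prob t (1/2) (snd xy))"
      by (intro sum.cong refl) (auto simp: pair_Rm[OF assms])
    then show ?thesis unfolding atLeast0AtMost sum.cartesian_product by (simp add: case_prod_beta')
  qed
  also have "\<dots> = (\<Sum>x\<le>t. \<Sum>i\<le>n. wt n b i * binom_prob t (1/2 + uu n w i) x)"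
    by (simp add: sum_distrib_left[symmetric] binom_sum)
  also have "\<dots> = (\<Sum>i\<le>n. wt n b i * (\<Sum>x\<le>t. binom_prob t (1/2 + uu n w i) x))"
    by (simp add: sum.swap[of _ "{..t}"] sum_distrib_left)
  also have "\<dots> = 1" by (simp add: binom_sum wt_sum[OF assms])
  finally show ?thesis .
qed

lemma pair_tv:
  assumes "n > 0"
  shows "(\<Sum>xy\<in>{0..t} \<times> {0..t}. \<bar>pair_prob (Rm n w True) t xy - pair_prob (Rm n w False) t xy\<bar>)
       = (\<Sum>x\<le>t. \<bar>mix n w t x\<bar>)"
proof -
  have "(\<Sum>xy\<in>{0..t} \<times> {0..t}. \<bar>pair_prob (Rm n w True) t xy - pair_prob (Rm n w False) t xy\<bar>)
      = (\<Sum>x\<le>t. \<Sum>y\<le>t. \<bar>mix n w t x\<bar> * binom_prob t (1/2) y)"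
  proof -
    have "(\<Sum>xy\<in>{0..t} \<times> {0..t}. \<bar>pair_prob (Rm n w True) t xy - pair_prob (Rm n w False) t xy\<bar>)
        = (\<Sum>xy\<in>{0..t} \<times> {0..t}. \<bar>mix n w t (fst xy)\<bar> * binom_prob t (1/2) (snd xy))"
      by (intro sum.cong refl) (auto simp: pair_diff[OF assms] abs_mult binom_nonneg)
    then show ?thesis unfolding atLeast0AtMost sum.cartesian_product by (simp add: case_prod_beta')
  qed
  also have "\<dots> = (\<Sum>x\<le>t. \<bar>mix n w t x\<bar>)"
    by (simp add: sum_distrib_left[symmetric] binom_sum)
  finally show ?thesis .
qed

lemma two_point:
  assumes n: "n > 0" and w: "0 < w" "w \<le> 1/2" and g: "valid_estimator g"
    and tv: "real N * (\<Sum>x\<le>t. \<bar>mix n w t x\<bar>) \<le> 1/2"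
  shows "w / (pi * real n) \<le> (SUP R\<in>{R. valid_R R}. risk N t g R)"
proof -
  define h where "h = 2 * w / real n"
  have hpos: "h > 0" using n w by (simp add: h_def)
  define f where "f d = (h / pi) * cos (pi * (w - d) / h)" for d :: real
  have flip: "lipschitz_on 1 UNIV f"
  proof (rule lipschitz_onI)
    fix a b :: real
    have "\<bar>f a - f b\<bar> = (h / pi) * \<bar>cos (pi * (w - a) / h) - cos (pi * (w - b) / h)\<bar>"
    proof -
      have "f a - f b = (h / pi) * (cos (pi * (w - a) / h) - cos (pi * (w - b) / h))"
        by (simp add: f_def right_diff_distrib)
      then show ?thesis using hpos by (simp add: abs_mult)
    qed
    also have "\<dots> \<le> (h / pi) * \<bar>pi * (w - a) / h - pi * (w - b) / h\<bar>"
      using hpos by (intro mult_left_mono cos_lip) auto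
    also have "\<dots> = \<bar>a - b\<bar>"
    proof -
      have "pi * (w - a) / h - pi * (w - b) / h = (pi / h) * (b - a)" using hpos by (simp add: field_simps)
      then have "\<bar>pi * (w - a) / h - pi * (w - b) / h\<bar> = (pi / h) * \<bar>a - b\<bar>"
        using hpos by (simp add: abs_mult abs_minus_commute)
      then show ?thesis using hpos by simp
    qed
    finally show "dist (f a) (f b) \<le> 1 * dist a b" by (simp add: dist_real_def)
  qed simp
  have fmlip: "lipschitz_on 1 UNIV (\<lambda>x. - f x)"
    using flip by (simp add: lipschitz_on_def dist_real_def abs_minus_commute)
  have fmeas: "f \<in> borel_measurable borel"
    by (rule borel_measurable_continuous_onI, rule lipschitz_on_continuous_on[OF flip])
  have fval: "f (- uu n w i) = (h / pi) * (-1)^i" for i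
  proof -
    have "pi * (w - - uu n w i) / h = real i * pi" using hpos n by (simp add: uu_def h_def field_simps)
    then show ?thesis by (simp add: f_def)
  qed
  let ?D1 = "Delta (Rm n w True)" and ?D2 = "Delta (Rm n w False)"
  have gd1: "goodM ?D1" and gd2: "goodM ?D2" using Rm_good n w by auto
  have vR1: "valid_R (Rm n w True)" and vR2: "valid_R (Rm n w False)" using valid_Rm n w by auto
  define \<delta> where "\<delta> = (\<integral>x. f x \<partial>?D1) - (\<integral>x. f x \<partial>?D2)"
  have \<delta>val: "\<delta> = 2 * h / pi"
  proof -
    have "\<delta> = (\<Sum>i\<le>n. (wt n True i - wt n False i) * ((h / pi) * (-1)^i))"
      unfolding \<delta>_def Delta_int[OF n fmeas] fval by (simp add: sum_subtractf[symmetric] algebra_simps)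
    also have "\<dots> = (h / pi) * (\<Sum>i\<le>n. \<bar>nu n i\<bar>)"
      by (simp add: sum_distrib_left nu_wt[symmetric] nu_def abs_mult power_abs mult_ac)
    finally show ?thesis using abs_nu_sum[OF n] by simp
  qed
  have Wsum: "\<delta> \<le> W1 ?D1 (g s) + W1 ?D2 (g s)" for s
  proof -
    have a: "(\<integral>x. f x \<partial>?D1) - (\<integral>x. f x \<partial>g s) \<le> W1 ?D1 (g s)"
      by (rule W1_ge[OF gd1 est_good[OF g] flip])
    have b: "(\<integral>x. - f x \<partial>?D2) - (\<integral>x. - f x \<partial>g s) \<le> W1 ?D2 (g s)"
      by (rule W1_ge[OF gd2 est_good[OF g] fmlip])
    show ?thesis using a b unfolding \<delta>_def by simp
  qed
  let ?P1 = "\<lambda>s. sample_prob (Rm n w True) t s" and ?P2 = "\<lambda>s. sample_prob (Rm n w False) t s"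
  let ?S = "samples N t"
  have S1: "(\<Sum>s\<in>?S. ?P1 s) = 1"
    unfolding sample_prob_def by (simp add: prod_sum pair_sum[OF n])
  have STV: "(\<Sum>s\<in>?S. \<bar>?P1 s - ?P2 s\<bar>) \<le> 1/2"
  proof -
    have "(\<Sum>s\<in>?S. \<bar>?P1 s - ?P2 s\<bar>)
        \<le> real N * (\<Sum>xy\<in>{0..t} \<times> {0..t}. \<bar>pair_prob (Rm n w True) t xy - pair_prob (Rm n w False) t xy\<bar>)"
      unfolding sample_prob_def
      by (rule prod_tv) (use pair_prob_bounds[OF vR1] pair_prob_bounds[OF vR2] pair_sum[OF n] in auto)
    also have "\<dots> \<le> 1/2" using tv by (simp add: pair_tv[OF n])
    finally show ?thesis .
  qed
  have "\<delta> / 2 \<le> \<delta> * (\<Sum>s\<in>?S. min (?P1 s) (?P2 s))"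
  proof -
    have "(\<Sum>s\<in>?S. ?P1 s) - (\<Sum>s\<in>?S. \<bar>?P1 s - ?P2 s\<bar>) \<le> (\<Sum>s\<in>?S. min (?P1 s) (?P2 s))"
      unfolding sum_subtractf[symmetric] by (rule sum_mono) auto
    then have "1/2 \<le> (\<Sum>s\<in>?S. min (?P1 s) (?P2 s))" using S1 STV by linarith
    moreover have "0 \<le> \<delta>" using \<delta>val hpos by simp
    ultimately show ?thesis by (metis mult_left_mono mult.commute times_divide_eq_left mult_1)
  qed
  also have "\<dots> \<le> (\<Sum>s\<in>?S. min (?P1 s) (?P2 s) * (W1 ?D1 (g s) + W1 ?D2 (g s)))"
    unfolding sum_distrib_left
    using sample_prob_bounds[OF vR1] sample_prob_bounds[OF vR2] Wsum
  proof (intro sum_mono)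
    fix s
    have "0 \<le> min (?P1 s) (?P2 s)" using sample_prob_bounds[OF vR1] sample_prob_bounds[OF vR2] by simp
    from mult_right_mono[OF Wsum[of s] this]
    show "\<delta> * min (?P1 s) (?P2 s) \<le> min (?P1 s) (?P2 s) * (W1 ?D1 (g s) + W1 ?D2 (g s))"
      by (simp only: mult.commute)
  qed
  also have "\<dots> \<le> risk N t g (Rm n w True) + risk N t g (Rm n w False)"
    unfolding risk_def sum.distrib[symmetric]
  proof (rule sum_mono)
    fix s
    have w1: "0 \<le> W1 ?D1 (g s)" and w2: "0 \<le> W1 ?D2 (g s)"
      using W1_nonneg[OF gd1 est_good[OF g]] W1_nonneg[OF gd2 est_good[OF g]] by auto
    have "min (?P1 s) (?P2 s) * W1 ?D1 (g s) \<le> ?P1 s * W1 ?D1 (g s)" by (rule mult_right_mono[OF _ w1]) simp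
    moreover have "min (?P1 s) (?P2 s) * W1 ?D2 (g s) \<le> ?P2 s * W1 ?D2 (g s)" by (rule mult_right_mono[OF _ w2]) simp
    ultimately show "min (?P1 s) (?P2 s) * (W1 ?D1 (g s) + W1 ?D2 (g s))
        \<le> ?P1 s * W1 ?D1 (g s) + ?P2 s * W1 ?D2 (g s)" by (simp add: distrib_left)
  qed
  also have "\<dots> \<le> 2 * (SUP R\<in>{R. valid_R R}. risk N t g R)"
  proof -
    have "risk N t g (Rm n w True) \<le> (SUP R\<in>{R. valid_R R}. risk N t g R)"
      by (rule cSUP_upper[OF _ risk_bdd[OF g]]) (use vR1 in simp)
    moreover have "risk N t g (Rm n w False) \<le> (SUP R\<in>{R. valid_R R}. risk N t g R)"
      by (rule cSUP_upper[OF _ risk_bdd[OF g]]) (use vR2 in simp)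
    ultimately show ?thesis by simp
  qed
  finally have "\<delta> / 4 \<le> (SUP R\<in>{R. valid_R R}. risk N t g R)" by simp
  moreover have "\<delta> / 4 = w / (pi * real n)" using \<delta>val n by (simp add: h_def field_simps)
  ultimately show ?thesis by simp
qed



lemma fact_lower: "(real k / 3)^k \<le> fact k"
proof (induction k)
  case 0 then show ?case by simp
next
  case (Suc k)
  have key: "((real k + 1) / 3)^k \<le> 3 * (real k / 3)^k"
  proof (cases "k = 0")
    case True then show ?thesis by simp
  next
    case False
    have "(1 + 1 / real k)^k \<le> exp 1"
      using exp_ge_one_plus_x_over_n_power_n[where x=1 and n=k] False by simp
    also have "\<dots> \<le> 3" by (rule exp_le)
    finally have e: "(1 + 1 / real k)^k \<le> 3" .
    have "(real k + 1) / 3 = (real k / 3) * (1 + 1 / real k)" using False by (simp add: field_simps)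
    then have "((real k + 1) / 3)^k = (real k / 3)^k * (1 + 1 / real k)^k"
      by (simp only: power_mult_distrib)
    also have "\<dots> \<le> (real k / 3)^k * 3" by (rule mult_left_mono[OF e]) simp
    finally show ?thesis by simp
  qed
  have "(real (Suc k) / 3)^(Suc k) = ((real k + 1) / 3) * ((real k + 1) / 3)^k" by (simp add: add.commute)
  also have "\<dots> \<le> ((real k + 1) / 3) * (3 * (real k / 3)^k)" by (rule mult_left_mono[OF key]) simp
  also have "\<dots> = (real k + 1) * (real k / 3)^k" by simp
  also have "\<dots> \<le> (real k + 1) * fact k" by (rule mult_left_mono[OF Suc.IH]) simp
  also have "\<dots> = fact (Suc k)" by simp
  finally show ?case .
qed

lemma term_bound:
  assumes "n > 0" "t > 0" "n \<le> k" "real t * a = real n / 27" "a \<ge> 0"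
  shows "real (t choose k) * a^k \<le> (1/9)^k"
proof -
  have kpos: "k > 0" using assms by simp
  have fk: "fact k > (0::real)" by simp
  have c: "real (t choose k) * fact k \<le> real t ^ k"
  proof -
    have "real ((t choose k) * fact k) \<le> real (t ^ k)" by (simp only: of_nat_le_iff binomial_fact_pow)
    then show ?thesis by (simp only: of_nat_mult of_nat_fact of_nat_power)
  qed
  have c2: "real (t choose k) \<le> real t ^ k / fact k" using c fk by (simp add: le_divide_eq)
  have "real (t choose k) * a^k \<le> real t ^ k / fact k * a^k"
    by (rule mult_right_mono[OF c2]) (use assms(5) in simp)
  also have "\<dots> = (real t * a)^k / fact k" by (simp add: power_mult_distrib)
  also have "\<dots> = (real n / 27)^k / fact k" by (simp only: assms(4))
  also have "\<dots> \<le> (real n / 27)^k / (real k / 3)^k"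
    by (rule divide_left_mono[OF fact_lower]) (use kpos in auto)
  also have "\<dots> = (real n / (9 * real k))^k"
  proof -
    have "(real n / 27) / (real k / 3) = real n / (9 * real k)" using kpos by (simp add: field_simps)
    then show ?thesis by (subst power_divide[symmetric]) (simp only:)
  qed
  also have "\<dots> \<le> (1/9)^k"
  proof (rule power_mono)
    show "real n / (9 * real k) \<le> 1/9" using assms kpos by (simp add: divide_simps)
  qed simp
  finally show ?thesis .
qed

lemma gp_aux: "(1 - 1 / 9) * (S::real) = A - B \<Longrightarrow> 0 \<le> B \<Longrightarrow> S \<le> 9 / 8 * A"
proof -
  assume a: "(1 - 1 / 9) * (S::real) = A - B" "0 \<le> B"
  have "S = 9/8 * (A - B)" using a(1) by simp
  then show ?thesis using a(2) by simp
qed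

lemma S_bound:
  assumes "n > 0" "t > 0" "real t * a = real n / 27" "a \<ge> 0"
  shows "(\<Sum>k\<in>{n..t}. real (t choose k) * a^k) \<le> 9/8 * (1/9)^n"
proof -
  have "(\<Sum>k\<in>{n..t}. real (t choose k) * a^k) \<le> (\<Sum>k\<in>{n..t}. (1/9::real)^k)"
    by (rule sum_mono) (rule term_bound[OF assms(1,2) _ assms(3,4)], simp)
  also have "\<dots> \<le> 9/8 * (1/9)^n"
  proof (cases "n \<le> t")
    case True
    have "(1 - 1/9) * (\<Sum>k\<in>{n..t}. (1/9::real)^k) = (1/9)^n - (1/9)^Suc t"
      by (rule sum_gp_multiplied[OF True])
    moreover have "(0::real) \<le> (1/9)^Suc t" by simp
    ultimately show ?thesis by (rule gp_aux)
  next
    case False then show ?thesis by simp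
  qed
  finally show ?thesis .
qed

lemma tv_from_S:
  assumes n: "n > 0" and w: "w \<ge> 0" and N: "N > 0"
    and S: "4 * (\<Sum>k\<in>{n..t}. real (t choose k) * (4 * w^2)^k) \<le> (1 / (2 * real N))^2"
  shows "real N * (\<Sum>x\<le>t. \<bar>mix n w t x\<bar>) \<le> 1/2"
proof -
  have "(\<Sum>x\<le>t. \<bar>mix n w t x\<bar>) \<le> 1 / (2 * real N)"
  proof (rule tv_bound[where b = "binom_prob t (1/2)"])
    show "binom_prob t (1/2) x > 0" if "x \<in> {..t}" for x
      using that by (simp add: binom_half)
    show "(\<Sum>x\<le>t. binom_prob t (1/2) x) = 1" by (rule binom_sum)
    show "(\<Sum>x\<le>t. (mix n w t x)^2 / binom_prob t (1/2) x) \<le> (1 / (2 * real N))^2"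
      using chi_bound[OF n w, of t] S by linarith
  qed (use N in auto)
  then show ?thesis using N by (simp add: field_simps)
qed



lemma ln2_gt: "1/2 < ln (2::real)"
proof -
  have "exp (1/2::real) < 2"
  proof (rule ccontr)
    assume "\<not> exp (1/2::real) < 2"
    then have "2 * 2 \<le> exp (1/2::real) * exp (1/2)" by (intro mult_mono) auto
    also have "\<dots> = exp 1" by (simp add: exp_add[symmetric])
    finally show False using exp_le by simp
  qed
  then have "ln (exp (1/2::real)) < ln 2" by (subst ln_less_cancel_iff) auto
  then show ?thesis by simp
qed

lemma pi_sq: "pi^2 \<le> (16::real)"
proof -
  have "pi * pi \<le> 4 * (4::real)" using pi_less_4 pi_gt_zero by (intro mult_mono) auto
  then show ?thesis by (simp add: power2_eq_square)
qed

lemma caseB_num: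
  fixes t N n :: nat and L w S :: real
  assumes t: "t > 0" and N: "N \<ge> 2" and L: "L = ln (real N)"
    and n1: "real n \<ge> L + 3" and n2: "real n \<le> 9 * L" and n27: "n \<le> 27 * t"
    and w_def: "w = sqrt (real n / (108 * real t))"
  shows "0 < n" "w^2 = real n / (108 * real t)" "0 < w" "w \<le> 1/2"
    "S \<le> 9/8 * (1/9)^n \<Longrightarrow> 4 * S \<le> (1 / (2 * real N))^2"
    "1/250 * max (1 / real t) (1 / sqrt (real t * L)) \<le> w / (pi * real n)"
proof -
  have "ln 2 \<le> ln (real N)" using N by simp
  then have Lpos: "L > 1/2" using ln2_gt L by linarith
  show npos: "n > 0" using n1 Lpos by linarith
  show w2: "w^2 = real n / (108 * real t)" unfolding w_def by simp
  show wpos: "w > 0" unfolding w_def using npos t by simp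
  show "w \<le> 1/2"
  proof -
    have "real n / (108 * real t) \<le> 1/4" using n27 t by (simp add: field_simps)
    then have "w \<le> sqrt (1/4)" unfolding w_def by (rule real_sqrt_le_mono)
    also have "sqrt (1/4::real) = 1/2" by (simp add: real_sqrt_divide)
    finally show ?thesis .
  qed
  have pow3: "8 * real N \<le> 3^n"
  proof -
    have "exp (L + 3) \<le> exp (real n)" using n1 by simp
    also have "exp (real n) = exp 1 ^ n" using exp_of_nat_mult[of n 1] by simp
    also have "\<dots> \<le> 3^n" by (intro power_mono exp_le) simp
    finally have a: "exp (L + 3) \<le> 3^n" .
    have "exp (L + 3) = real N * exp 3" using N L by (simp add: exp_add)
    moreover have "8 \<le> exp (3::real)"
    proof -
      have "(2::real)^3 \<le> exp 1 ^ 3" by (intro power_mono) (use exp_ge_add_one_self[of 1] in auto)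
      also have "exp 1 ^ 3 = exp (3::real)" using exp_of_nat_mult[of 3 "1::real"] by simp
      finally show ?thesis by simp
    qed
    ultimately have "8 * real N \<le> exp (L + 3)" using N by simp
    with a show ?thesis by simp
  qed
  show "4 * S \<le> (1 / (2 * real N))^2" if Sb: "S \<le> 9/8 * (1/9)^n"
  proof -
    have "(8 * real N)^2 \<le> (3^n)^2" using pow3 N by (intro power_mono) auto
    moreover have "((3::real)^n)^2 = 9^n"
    proof -
      have "((3::real)^n)^2 = (3^2)^n" by (metis power_mult mult.commute)
      then show ?thesis by simp
    qed
    moreover have "(8 * real N)^2 = 64 * (real N)^2" by (simp add: power2_eq_square)
    ultimately have nine: "64 * (real N)^2 \<le> 9^n" by simp
    have "4 * S \<le> 4 * (9/8 * (1/9)^n)" using Sb by simp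
    also have "\<dots> = (9/2) / 9^n" by (simp add: power_one_over)
    also have "\<dots> \<le> 1 / (4 * (real N)^2)"
    proof -
      have p9: "(0::real) < 9^n" by simp
      have pN: "0 < 4 * (real N)^2" using N by simp
      have "(9/2) * (4 * (real N)^2) \<le> 1 * 9^n" using nine zero_le_power2[of "real N"] by linarith
      then show ?thesis using p9 pN by (simp add: divide_simps)
    qed
    also have "\<dots> = (1 / (2 * real N))^2" by (simp add: power2_eq_square)
    finally show ?thesis .
  qed
  have c1: "1/250 * (1 / real t) \<le> w / (pi * real n)"
  proof -
    have "(pi * real n / 250)^2 \<le> (w * real t)^2"
    proof -
      have "(pi * real n / 250)^2 = pi^2 * (real n * real n) / 62500" by (simp add: power2_eq_square)
      also have "\<dots> \<le> 16 * (real n * (27 * real t)) / 62500"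
        using pi_sq n27 by (intro divide_right_mono mult_mono) auto
      also have "\<dots> \<le> real n * real t / 108" by simp
      also have "\<dots> = w^2 * (real t)^2" using t by (subst w2) (simp add: power2_eq_square field_simps)
      also have "\<dots> = (w * real t)^2" by (simp add: power_mult_distrib)
      finally show ?thesis .
    qed
    then have h: "pi * real n / 250 \<le> w * real t"
      by (rule power2_le_imp_le) (use wpos t in simp)
    have d: "0 < pi * real n * real t" using t npos by simp
    have "(pi * real n / 250) / (pi * real n * real t) \<le> (w * real t) / (pi * real n * real t)"
      by (rule divide_right_mono[OF h]) (use d in simp)
    moreover have "(pi * real n / 250) / (pi * real n * real t) = 1/250 * (1 / real t)"
      using d npos t by (simp add: field_simps)
    moreover have "(w * real t) / (pi * real n * real t) = w / (pi * real n)"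
      using d npos t by (simp add: field_simps)
    ultimately show ?thesis by simp
  qed
  have c2: "1/250 * (1 / sqrt (real t * L)) \<le> w / (pi * real n)"
  proof -
    have tl: "real t * L > 0" using t Lpos by simp
    have "(pi * real n / 250)^2 \<le> (w * sqrt (real t * L))^2"
    proof -
      have "(pi * real n / 250)^2 = pi^2 * (real n * real n) / 62500" by (simp add: power2_eq_square)
      also have "\<dots> \<le> 16 * (real n * (9 * L)) / 62500"
        using pi_sq n2 npos by (intro divide_right_mono mult_mono) auto
      also have "\<dots> \<le> real n * L / 108" using Lpos npos by simp
      also have "\<dots> = (w * sqrt (real t * L))^2" using t tl
        by (simp add: power_mult_distrib w2)
      finally show ?thesis .
    qed
    then have h: "pi * real n / 250 \<le> w * sqrt (real t * L)"
      by (rule power2_le_imp_le) (use wpos tl in simp)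
    have sp: "0 < sqrt (real t * L)" using tl by simp
    have d: "0 < pi * real n * sqrt (real t * L)" using sp npos by simp
    have "(pi * real n / 250) / (pi * real n * sqrt (real t * L)) \<le> (w * sqrt (real t * L)) / (pi * real n * sqrt (real t * L))"
      by (rule divide_right_mono[OF h]) (use d in simp)
    moreover have "(pi * real n / 250) / (pi * real n * sqrt (real t * L)) = 1/250 * (1 / sqrt (real t * L))"
      using d npos sp t Lpos by (simp add: field_simps)
    moreover have "(w * sqrt (real t * L)) / (pi * real n * sqrt (real t * L)) = w / (pi * real n)"
      using d npos sp t Lpos by (simp add: field_simps)
    ultimately show ?thesis by simp
  qed
  show "1/250 * max (1 / real t) (1 / sqrt (real t * L)) \<le> w / (pi * real n)"
  proof -
    have "max (1 / real t) (1 / sqrt (real t * L)) = 1 / real t \<or> max (1 / real t) (1 / sqrt (real t * L)) = 1 / sqrt (real t * L)"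
      by (simp add: max_def)
    then show ?thesis using c1 c2 by (elim disjE) (simp only:)+
  qed
qed

lemma caseA_num:
  fixes t N n :: nat and L :: real
  assumes t: "t > 0" and n2: "real n \<le> 9 * L" and n27: "n > 27 * t"
  shows "1/250 * max (1 / real t) (1 / sqrt (real t * L)) \<le> (1/2) / (pi * real (Suc t))"
proof -
  have tL: "real t \<le> L" using n2 n27 by linarith
  have m: "max (1 / real t) (1 / sqrt (real t * L)) = 1 / real t"
  proof -
    have "real t * real t \<le> real t * L" using tL by (intro mult_left_mono) auto
    then have "sqrt (real t * real t) \<le> sqrt (real t * L)" by (rule real_sqrt_le_mono)
    then have "real t \<le> sqrt (real t * L)" by simp
    moreover have "real t > 0" using t by simp
    ultimately have "0 < sqrt (real t * L) * real t" by (intro mult_pos_pos) linarith+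
    then have "1 / sqrt (real t * L) \<le> 1 / real t"
      using \<open>real t \<le> sqrt (real t * L)\<close> by (intro divide_left_mono) auto
    then show ?thesis by (simp add: max_def)
  qed
  have "1/250 * (1 / real t) \<le> (1/2) / (pi * real (Suc t))"
  proof -
    have "pi * real (Suc t) \<le> 4 * (2 * real t)" using pi_less_4 t
      by (intro mult_mono) auto
    then have le: "pi * real (Suc t) * 2 \<le> 250 * real t" by simp
    have pp: "0 < pi * real (Suc t) * 2" by simp
    have "1 / (250 * real t) \<le> 1 / (pi * real (Suc t) * 2)"
      by (rule divide_left_mono[OF le]) (use pp t in auto)
    then show ?thesis by (simp add: mult_ac)
  qed
  then show ?thesis using m by simp
qed

lemma caseB:
  fixes t N n :: nat and L :: real
  assumes t: "t > 0" and N: "N \<ge> 2" and L: "L = ln (real N)"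
    and n1: "real n \<ge> L + 3" and n2: "real n \<le> 9 * L" and n27: "n \<le> 27 * t"
    and g: "valid_estimator g"
  shows "1/250 * max (1 / real t) (1 / sqrt (real t * L)) \<le> (SUP R\<in>{R. valid_R R}. risk N t g R)"
proof -
  define w where "w = sqrt (real n / (108 * real t))"
  note cb = caseB_num[OF t N L n1 n2 n27 w_def]
  have tw: "real t * (4 * w^2) = real n / 27" unfolding cb(2) using t by (simp add: field_simps)
  have Sb: "(\<Sum>k\<in>{n..t}. real (t choose k) * (4 * w^2)^k) \<le> 9/8 * (1/9)^n"
    by (rule S_bound[OF cb(1) t tw]) simp
  have tv: "real N * (\<Sum>x\<le>t. \<bar>mix n w t x\<bar>) \<le> 1/2"
    by (rule tv_from_S[OF cb(1) _ _ cb(5)[OF Sb]]) (use cb(3) N in auto)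
  have main: "w / (pi * real n) \<le> (SUP R\<in>{R. valid_R R}. risk N t g R)"
    by (rule two_point[OF cb(1) cb(3) cb(4) g tv])
  show ?thesis using cb(6) main by (rule order_trans)
qed

lemma caseA:
  fixes t N n :: nat and L :: real
  assumes t: "t > 0" and N: "N \<ge> 2" and L: "L = ln (real N)"
    and n2: "real n \<le> 9 * L" and n27: "n > 27 * t"
    and g: "valid_estimator g"
  shows "1/250 * max (1 / real t) (1 / sqrt (real t * L)) \<le> (SUP R\<in>{R. valid_R R}. risk N t g R)"
proof -
  have tv: "real N * (\<Sum>x\<le>t. \<bar>mix (Suc t) (1/2) t x\<bar>) \<le> 1/2"
    by (rule tv_from_S) (use N in auto)
  have main: "(1/2) / (pi * real (Suc t)) \<le> (SUP R\<in>{R. valid_R R}. risk N t g R)"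
    by (rule two_point[OF _ _ _ g tv]) auto
  show ?thesis using caseA_num[OF t n2 n27] main by (rule order_trans)
qed

theorem theorem1:
  shows "\<exists>c>0. \<forall>(t::nat) (N::nat). 0 < t \<longrightarrow> 0 < N \<longrightarrow>
           real t \<le> real N powr (2 * (exp 4 - 1)) / 36 \<longrightarrow>
           (\<forall>g. valid_estimator g \<longrightarrow>
              (SUP R \<in> {R. valid_R R}. risk N t g R)
                \<ge> c * max (1 / real t) (1 / sqrt (real t * ln (real N))))"
proof (intro exI[of _ "1/250::real"] conjI allI impI)
  show "(0::real) < 1/250" by simp
  fix t N :: nat and g :: "(nat \<times> nat) list \<Rightarrow> real measure"
  assume t: "0 < t" and N0: "0 < N" and tb: "real t \<le> real N powr (2 * (exp 4 - 1)) / 36"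
    and g: "valid_estimator g"
  have N: "N \<ge> 2"
  proof (rule ccontr)
    assume "\<not> N \<ge> 2"
    then have "N = 1" using N0 by simp
    then have "real t \<le> 1/36" using tb by simp
    then show False using t by simp
  qed
  define L where "L = ln (real N)"
  have "ln 2 \<le> ln (real N)" using N by simp
  then have Lh: "L > 1/2" using ln2_gt L_def by linarith
  define n where "n = nat \<lceil>L\<rceil> + 3"
  have cn: "real n = of_int \<lceil>L\<rceil> + 3" unfolding n_def using Lh by simp
  have n1: "real n \<ge> L + 3" using cn le_of_int_ceiling[of L] by linarith
  have n2: "real n \<le> 9 * L" using cn of_int_ceiling_le_add_one[of L] Lh by linarith
  show "1/250 * max (1 / real t) (1 / sqrt (real t * ln (real N))) \<le> (SUP R \<in> {R. valid_R R}. risk N t g R)"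
  proof (cases "n \<le> 27 * t")
    case True
    show ?thesis using caseB[OF t N L_def n1 n2 True g] by (simp add: L_def)
  next
    case False
    then have "n > 27 * t" by simp
    show ?thesis using caseA[OF t N L_def n2 \<open>n > 27 * t\<close> g] by (simp add: L_def)
  qed
qed

end
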